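(* Let $d\geq 3$ and let $G$ be a graph on $n$ vertices that is not $M$-independent in $\mathbb{R}^{d-2}$. For $i=1,\dots,d$ let $k_i$ denote the dimension of the space of infinitesimal motions of a generic realization of $G$ in $\mathbb{C}^i$. Then $k_i\geq 2k_{i+1}-k_{i+2}+1$ for $i=1,\dots,d-2$.
   Context: For $p:V\to\mathbb{C}^i$, the rigidity matrix $R(G,p)$ is the $|E|\times i|V|$ matrix whose row for edge $uv$ has $p(u)-p(v)$ in the columns of $u$, $p(v)-p(u)$ in the columns of $v$, zeros elsewhere; the infinitesimal motions are the elements of $\ker R(G,p)$. A realization is generic if its coordinates are algebraically independent over $\mathbb{Q}$ (the dimension $k_i$ is the same for all generic realizations). $G$ is $M$-independent in $\mathbb{R}^k$ if the rows of $R(G,p)$ are linearly independent for a generic $p:V\to\mathbb{R}^k$. *)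

theory Defs
  imports "HOL-Analysis.Analysis" "HOL-Library.Function_Algebras"
begin

text \<open>Graphs: vertex set {0..<n}; edges are pairs (u,v) with u < v < n.
  A realization in K^i is a map p :: nat => nat => K, p w j being the j-th
  coordinate (j < i) of vertex w.\<close>

definition simple_graph :: "nat \<Rightarrow> (nat \<times> nat) set \<Rightarrow> bool" where
  "simple_graph n E \<longleftrightarrow> E \<subseteq> {(u, v). u < v \<and> v < n}"

definition rig_entry :: "(nat \<Rightarrow> nat \<Rightarrow> 'a::ring) \<Rightarrow> nat \<times> nat \<Rightarrow> nat \<Rightarrow> nat \<Rightarrow> 'a" where
  "rig_entry p e w j =
     (if w = fst e then p (fst e) j - p (snd e) j
      else if w = snd e then p (snd e) j - p (fst e) j else 0)"

definition alg_indep_Q :: "'t set \<Rightarrow> ('t \<Rightarrow> 'a::field_char_0) \<Rightarrow> bool" where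
  "alg_indep_Q J x \<longleftrightarrow>
     (\<forall>(S :: ('t \<Rightarrow> nat) set) (c :: ('t \<Rightarrow> nat) \<Rightarrow> rat).
        finite S \<and> (\<forall>m\<in>S. \<forall>t. t \<notin> J \<longrightarrow> m t = 0) \<and>
        (\<Sum>m\<in>S. of_rat (c m) * (\<Prod>t\<in>J. x t ^ m t)) = 0
        \<longrightarrow> (\<forall>m\<in>S. c m = 0))"

definition generic :: "nat \<Rightarrow> nat \<Rightarrow> (nat \<Rightarrow> nat \<Rightarrow> 'a::field_char_0) \<Rightarrow> bool" where
  "generic n i p \<longleftrightarrow> alg_indep_Q ({0..<n} \<times> {0..<i}) (\<lambda>(w, j). p w j)"

definition inf_motions :: "nat \<Rightarrow> (nat \<times> nat) set \<Rightarrow> nat \<Rightarrow> (nat \<Rightarrow> nat \<Rightarrow> complex)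
    \<Rightarrow> (nat \<Rightarrow> nat \<Rightarrow> complex) set" where
  "inf_motions n E i p =
     {m. (\<forall>w j. (w \<ge> n \<or> j \<ge> i) \<longrightarrow> m w j = 0) \<and>
         (\<forall>e\<in>E. (\<Sum>w<n. \<Sum>j<i. rig_entry p e w j * m w j) = 0)}"

definition cscale :: "complex \<Rightarrow> (nat \<Rightarrow> nat \<Rightarrow> complex) \<Rightarrow> (nat \<Rightarrow> nat \<Rightarrow> complex)" where
  "cscale c m = (\<lambda>w j. c * m w j)"

definition motion_dim :: "nat \<Rightarrow> (nat \<times> nat) set \<Rightarrow> nat \<Rightarrow> (nat \<Rightarrow> nat \<Rightarrow> complex) \<Rightarrow> nat" where
  "motion_dim n E i p = vector_space.dim cscale (inf_motions n E i p)"

definition rows_independent :: "nat \<Rightarrow> (nat \<times> nat) set \<Rightarrow> nat \<Rightarrow> (nat \<Rightarrow> nat \<Rightarrow> real) \<Rightarrow> bool" where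
  "rows_independent n E k p \<longleftrightarrow>
     (\<forall>c :: nat \<times> nat \<Rightarrow> real.
        (\<forall>w<n. \<forall>j<k. (\<Sum>e\<in>E. c e * rig_entry p e w j) = 0) \<longrightarrow> (\<forall>e\<in>E. c e = 0))"

definition M_independent :: "nat \<Rightarrow> (nat \<times> nat) set \<Rightarrow> nat \<Rightarrow> bool" where
  "M_independent n E k \<longleftrightarrow>
     (\<forall>p :: nat \<Rightarrow> nat \<Rightarrow> real. generic n k p \<longrightarrow> rows_independent n E k p)"

end

theory Submission
  imports Defs "Jordan_Normal_Form.Determinant"
begin

definition mon :: "(nat \<times> nat) set \<Rightarrow> (nat \<times> nat \<Rightarrow> nat) \<Rightarrow> (nat \<Rightarrow> nat \<Rightarrow> complex) \<Rightarrow> complex" where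
  "mon V m x = (\<Prod>t\<in>V. (\<lambda>(w, j). x w j) t ^ m t)"

definition polyfun :: "(nat \<times> nat) set \<Rightarrow> ((nat \<Rightarrow> nat \<Rightarrow> complex) \<Rightarrow> complex) \<Rightarrow> bool" where
  "polyfun V f \<longleftrightarrow> (\<exists>S c. finite S \<and> (\<forall>m\<in>S. \<forall>t. t \<notin> V \<longrightarrow> m t = 0) \<and>
     (\<forall>x. f x = (\<Sum>m\<in>S. of_rat (c m) * mon V m x)))"

lemma polyfun_transfer:
  assumes "polyfun V f" "alg_indep_Q V (\<lambda>(w, j). x w j)" "f x = 0"
  shows "f y = 0"
proof -
  obtain S c where S: "finite S" "\<forall>m\<in>S. \<forall>t. t \<notin> V \<longrightarrow> m t = 0"
    "\<And>x. f x = (\<Sum>m\<in>S. of_rat (c m) * mon V m x)"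
    using assms(1) unfolding polyfun_def by blast
  have "\<forall>m\<in>S. c m = 0"
    using assms(2) S assms(3) unfolding alg_indep_Q_def mon_def by auto
  then show ?thesis using S(3)[of y] by simp
qed

lemma polyfun_const: "polyfun V (\<lambda>x. of_rat q)"
  unfolding polyfun_def
  by (rule exI[of _ "{\<lambda>t. 0}"], rule exI[of _ "\<lambda>_. q"]) (simp add: mon_def)

lemma polyfun_of_int: "polyfun V (\<lambda>x. of_int k)"
  using polyfun_const[of V "of_int k"] by simp

lemma polyfun_var:
  assumes "finite V" "(w, j) \<in> V"
  shows "polyfun V (\<lambda>x. x w j)"
  unfolding polyfun_def
proof (rule exI[of _ "{\<lambda>t. if t = (w, j) then 1 else 0}"], rule exI[of _ "\<lambda>_. 1"], intro conjI allI ballI impI)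
  fix x
  have "mon V (\<lambda>t. if t = (w, j) then 1 else 0) x = x w j"
    unfolding mon_def using assms
    by (simp add: prod.remove[OF assms] if_distrib[of "\<lambda>e. _ ^ e"] cong: if_cong)
  then show "x w j = (\<Sum>m\<in>{\<lambda>t. if t = (w, j) then 1 else 0}. of_rat 1 * mon V m x)" by simp
qed (use assms in auto)

lemma polyfun_add:
  assumes "polyfun V f" "polyfun V g"
  shows "polyfun V (\<lambda>x. f x + g x)"
proof -
  obtain S1 c1 where S1: "finite S1" "\<forall>m\<in>S1. \<forall>t. t \<notin> V \<longrightarrow> m t = 0"
    "\<And>x. f x = (\<Sum>m\<in>S1. of_rat (c1 m) * mon V m x)"
    using assms(1) unfolding polyfun_def by blast
  obtain S2 c2 where S2: "finite S2" "\<forall>m\<in>S2. \<forall>t. t \<notin> V \<longrightarrow> m t = 0"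
    "\<And>x. g x = (\<Sum>m\<in>S2. of_rat (c2 m) * mon V m x)"
    using assms(2) unfolding polyfun_def by blast
  define c where "c m = (if m \<in> S1 then c1 m else 0) + (if m \<in> S2 then c2 m else 0)" for m
  have "f x + g x = (\<Sum>m\<in>S1 \<union> S2. of_rat (c m) * mon V m x)" for x
  proof -
    have "(\<Sum>m\<in>S1 \<union> S2. of_rat (c m) * mon V m x) =
      (\<Sum>m\<in>S1 \<union> S2. (if m \<in> S1 then of_rat (c1 m) * mon V m x else 0)) +
      (\<Sum>m\<in>S1 \<union> S2. (if m \<in> S2 then of_rat (c2 m) * mon V m x else 0))"
      unfolding c_def sum.distrib[symmetric] by (rule sum.cong) (auto simp: of_rat_add distrib_right)
    also have "\<dots> = f x + g x"
      unfolding S1(3) S2(3) sum.If_cases[OF finite_UnI[OF S1(1) S2(1)]]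
      by (simp add: Int_absorb1 Int_absorb2)
    finally show ?thesis by simp
  qed
  then show ?thesis unfolding polyfun_def using S1 S2
    by (intro exI[of _ "S1 \<union> S2"] exI[of _ c]) auto
qed

lemma mon_add: "mon V (\<lambda>t. a t + b t) x = mon V a x * mon V b x"
  unfolding mon_def by (simp add: power_add prod.distrib)

lemma polyfun_mult:
  assumes "polyfun V f" "polyfun V g"
  shows "polyfun V (\<lambda>x. f x * g x)"
proof -
  obtain S1 c1 where S1: "finite S1" "\<forall>m\<in>S1. \<forall>t. t \<notin> V \<longrightarrow> m t = 0"
    "\<And>x. f x = (\<Sum>m\<in>S1. of_rat (c1 m) * mon V m x)"
    using assms(1) unfolding polyfun_def by blast
  obtain S2 c2 where S2: "finite S2" "\<forall>m\<in>S2. \<forall>t. t \<notin> V \<longrightarrow> m t = 0"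
    "\<And>x. g x = (\<Sum>m\<in>S2. of_rat (c2 m) * mon V m x)"
    using assms(2) unfolding polyfun_def by blast
  define h where "h = (\<lambda>(a::nat\<times>nat\<Rightarrow>nat, b::nat\<times>nat\<Rightarrow>nat). (\<lambda>t. a t + b t))"
  define S where "S = h ` (S1 \<times> S2)"
  define c where "c m = (\<Sum>ab\<in>{ab \<in> S1 \<times> S2. h ab = m}. c1 (fst ab) * c2 (snd ab))" for m
  have fin: "finite (S1 \<times> S2)" using S1(1) S2(1) by simp
  have "f x * g x = (\<Sum>m\<in>S. of_rat (c m) * mon V m x)" for x
  proof -
    have "f x * g x = (\<Sum>ab\<in>S1 \<times> S2. of_rat (c1 (fst ab) * c2 (snd ab)) * mon V (h ab) x)"
      unfolding S1(3) S2(3) sum_product sum.cartesian_product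
      by (rule sum.cong) (auto simp: h_def mon_add of_rat_mult)
    also have "\<dots> = (\<Sum>m\<in>S. \<Sum>ab\<in>{ab \<in> S1 \<times> S2. h ab = m}. of_rat (c1 (fst ab) * c2 (snd ab)) * mon V (h ab) x)"
      by (rule sum.group[symmetric]) (use fin in \<open>auto simp: S_def\<close>)
    also have "\<dots> = (\<Sum>m\<in>S. of_rat (c m) * mon V m x)"
      unfolding c_def of_rat_sum sum_distrib_right by (rule sum.cong) auto
    finally show ?thesis .
  qed
  moreover have "finite S" using fin by (simp add: S_def)
  moreover have "\<forall>m\<in>S. \<forall>t. t \<notin> V \<longrightarrow> m t = 0" using S1(2) S2(2) by (auto simp: S_def h_def)
  ultimately show ?thesis unfolding polyfun_def by blast
qed

lemma polyfun_uminus: "polyfun V f \<Longrightarrow> polyfun V (\<lambda>x. - f x)"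
  using polyfun_mult[OF polyfun_of_int[of V "-1"]] by simp

lemma polyfun_diff: "polyfun V f \<Longrightarrow> polyfun V g \<Longrightarrow> polyfun V (\<lambda>x. f x - g x)"
  using polyfun_add[OF _ polyfun_uminus] by simp

lemma polyfun_sum:
  assumes "finite A" "\<And>a. a \<in> A \<Longrightarrow> polyfun V (f a)"
  shows "polyfun V (\<lambda>x. \<Sum>a\<in>A. f a x)"
  using assms
proof (induction A rule: finite_induct)
  case empty then show ?case using polyfun_of_int[of V 0] by simp
next
  case (insert a A) then show ?case using polyfun_add[of V "f a"] by simp
qed

lemma polyfun_prod:
  assumes "finite A" "\<And>a. a \<in> A \<Longrightarrow> polyfun V (f a)"
  shows "polyfun V (\<lambda>x. \<Prod>a\<in>A. f a x)"
  using assms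
proof (induction A rule: finite_induct)
  case empty then show ?case using polyfun_of_int[of V 1] by simp
next
  case (insert a A) then show ?case using polyfun_mult[of V "f a"] by simp
qed

lemma polyfun_cong: "polyfun V f \<Longrightarrow> (\<And>x. f x = g x) \<Longrightarrow> polyfun V g"
  unfolding polyfun_def by simp

lemma underdetermined:
  fixes a :: "'y \<Rightarrow> 'x \<Rightarrow> 'a::field"
  assumes "finite Y" "finite X" "card Y < card X"
  shows "\<exists>l. (\<exists>x\<in>X. l x \<noteq> 0) \<and> (\<forall>y\<in>Y. (\<Sum>x\<in>X. a y x * l x) = 0)"
  using assms
proof (induction Y arbitrary: X a rule: finite_induct)
  case empty
  then obtain x0 where "x0 \<in> X" by fastforce
  then show ?case by (intro exI[of _ "\<lambda>_. 1"]) auto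
next
  case (insert y0 Y)
  show ?case
  proof (cases "\<forall>x\<in>X. a y0 x = 0")
    case True
    have "card Y < card X" using insert by simp
    then obtain l where "\<exists>x\<in>X. l x \<noteq> 0" "\<forall>y\<in>Y. (\<Sum>x\<in>X. a y x * l x) = 0"
      using insert.IH[OF insert.prems(1)] by blast
    then show ?thesis using True by (intro exI[of _ l]) auto
  next
    case False
    then obtain x0 where x0: "x0 \<in> X" "a y0 x0 \<noteq> 0" by blast
    define X' where "X' = X - {x0}"
    define a' where "a' y x = a y x - a y x0 * a y0 x / a y0 x0" for y x
    have fX': "finite X'" using insert.prems by (simp add: X'_def)
    have "card Y < card X'" using insert x0 by (simp add: X'_def)
    then obtain l' where l': "\<exists>x\<in>X'. l' x \<noteq> 0" "\<forall>y\<in>Y. (\<Sum>x\<in>X'. a' y x * l' x) = 0"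
      using insert.IH[OF fX'] by blast
    define s where "s = (\<Sum>x\<in>X'. a y0 x * l' x)"
    define l where "l x = (if x = x0 then - s / a y0 x0 else l' x)" for x
    have sumX: "(\<Sum>x\<in>X. a y x * l x) = a y x0 * l x0 + (\<Sum>x\<in>X'. a y x * l' x)" for y
      unfolding X'_def using x0 insert.prems(1)
      by (simp add: sum.remove[of X x0] l_def)
    show ?thesis
    proof (intro exI[of _ l] conjI ballI)
      show "\<exists>x\<in>X. l x \<noteq> 0" using l' by (auto simp: l_def X'_def)
    next
      fix y assume "y \<in> insert y0 Y"
      then show "(\<Sum>x\<in>X. a y x * l x) = 0"
      proof
        assume "y = y0"
        have "(\<Sum>x\<in>X. a y0 x * l x) = a y0 x0 * l x0 + s" using sumX unfolding s_def by simp
        then show ?thesis using x0 \<open>y = y0\<close> by (simp add: l_def)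
      next
        assume y: "y \<in> Y"
        have "(\<Sum>x\<in>X'. a' y x * l' x) = (\<Sum>x\<in>X'. a y x * l' x) - a y x0 / a y0 x0 * s"
          unfolding a'_def s_def by (simp add: algebra_simps sum_subtractf sum_distrib_left sum_divide_distrib)
        then have "(\<Sum>x\<in>X'. a y x * l' x) = a y x0 * s / a y0 x0" using l'(2) y by simp
        then have "(\<Sum>x\<in>X. a y x * l x) = a y x0 * l x0 + a y x0 * s / a y0 x0" using sumX[of y] by simp
        then show ?thesis using x0 by (simp add: l_def)
      qed
    qed
  qed
qed

definition indep_on :: "'c set \<Rightarrow> 'r set \<Rightarrow> ('c \<Rightarrow> 'r \<Rightarrow> 'a::field) \<Rightarrow> bool" where
  "indep_on J R v \<longleftrightarrow> (\<forall>l. (\<forall>e\<in>R. (\<Sum>c\<in>J. l c * v c e) = 0) \<longrightarrow> (\<forall>c\<in>J. l c = 0))"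

lemma indep_on_card_le:
  assumes "finite J" "finite R" "indep_on J R v"
  shows "card J \<le> card R"
proof (rule ccontr)
  assume "\<not> ?thesis"
  then obtain l where "\<exists>c\<in>J. l c \<noteq> 0" "\<forall>e\<in>R. (\<Sum>c\<in>J. v c e * l c) = 0"
    using underdetermined[of R J "\<lambda>e c. v c e"] assms by auto
  then show False using assms(3) unfolding indep_on_def by (auto simp: mult.commute)
qed

lemma lemmaC:
  fixes v :: "'c \<Rightarrow> 'r \<Rightarrow> 'a::field"
  assumes "finite J" "finite R" "indep_on J R v"
  shows "\<exists>I\<subseteq>R. card I = card J \<and> indep_on J I v"
proof -
  obtain I where I: "I \<subseteq> R" "indep_on J I v"
    and Imin: "\<And>I'. I' \<subseteq> R \<and> indep_on J I' v \<Longrightarrow> card I \<le> card I'"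
    using ex_has_least_nat[of "\<lambda>I. I \<subseteq> R \<and> indep_on J I v" R card] assms by blast
  have fI: "finite I" using I(1) assms(2) finite_subset by blast
  have le1: "card J \<le> card I" using indep_on_card_le[OF assms(1) fI I(2)] .
  have le2: "card I \<le> card J"
  proof (rule ccontr)
    assume "\<not> ?thesis"
    then have lt: "card J < card I" by simp
    have "\<forall>e\<in>I. \<exists>l. (\<forall>e'\<in>I - {e}. (\<Sum>c\<in>J. l c * v c e') = 0) \<and> (\<Sum>c\<in>J. l c * v c e) \<noteq> 0"
    proof
      fix e assume e: "e \<in> I"
      have "card (I - {e}) < card I" by (rule card_Diff1_less[OF fI e])
      then have "\<not> indep_on J (I - {e}) v" using Imin[of "I - {e}"] I(1) by auto
      then obtain l where l: "\<forall>e'\<in>I - {e}. (\<Sum>c\<in>J. l c * v c e') = 0" "\<exists>c\<in>J. l c \<noteq> 0"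
        unfolding indep_on_def by blast
      have "(\<Sum>c\<in>J. l c * v c e) \<noteq> 0"
      proof
        assume "(\<Sum>c\<in>J. l c * v c e) = 0"
        then have "\<forall>e'\<in>I. (\<Sum>c\<in>J. l c * v c e') = 0" using l(1) by blast
        then show False using I(2) l(2) unfolding indep_on_def by blast
      qed
      then show "\<exists>l. (\<forall>e'\<in>I - {e}. (\<Sum>c\<in>J. l c * v c e') = 0) \<and> (\<Sum>c\<in>J. l c * v c e) \<noteq> 0"
        using l(1) by blast
    qed
    then obtain L where L: "\<And>e. e \<in> I \<Longrightarrow> (\<forall>e'\<in>I - {e}. (\<Sum>c\<in>J. L e c * v c e') = 0) \<and> (\<Sum>c\<in>J. L e c * v c e) \<noteq> 0"
      by metis
    obtain mu where mu: "\<exists>e\<in>I. mu e \<noteq> 0" "\<forall>c\<in>J. (\<Sum>e\<in>I. v c e * mu e) = 0"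
      using underdetermined[OF assms(1) fI lt, of v] by blast
    then obtain e0 where e0: "e0 \<in> I" "mu e0 \<noteq> 0" by blast
    have "0 = (\<Sum>c\<in>J. L e0 c * (\<Sum>e\<in>I. v c e * mu e))" using mu(2) by simp
    also have "\<dots> = (\<Sum>e\<in>I. mu e * (\<Sum>c\<in>J. L e0 c * v c e))"
      by (simp add: sum_distrib_left sum_distrib_right algebra_simps sum.swap[of _ J I])
    also have "\<dots> = mu e0 * (\<Sum>c\<in>J. L e0 c * v c e0)"
      using L[OF e0(1)] e0(1) fI by (simp add: sum.remove[of I e0])
    finally show False using L[OF e0(1)] e0(2) by simp
  qed
  show ?thesis using I le1 le2 by (intro exI[of _ I]) auto
qed

lemma det_indep:
  fixes A :: "'r \<Rightarrow> 'c \<Rightarrow> complex"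
  assumes f: "bij_betw f {0..<s} I" and g: "bij_betw g {0..<s} J"
  shows "Determinant.det (mat s s (\<lambda>(a,b). A (f a) (g b))) \<noteq> 0 \<longleftrightarrow> indep_on J I (\<lambda>c e. A e c)"
proof -
  define M where "M = mat s s (\<lambda>(a,b). A (f a) (g b))"
  have M: "M \<in> carrier_mat s s" unfolding M_def by simp
  have Mv: "(M *\<^sub>v v) $ a = (\<Sum>b\<in>{0..<s}. A (f a) (g b) * v $ b)" if "a < s" "v \<in> carrier_vec s" for a v
    using that unfolding M_def by (auto simp: scalar_prod_def)
  have reidx: "(\<Sum>c\<in>J. h c) = (\<Sum>b\<in>{0..<s}. h (g b))" for h :: "'c \<Rightarrow> complex"
    using sum.reindex_bij_betw[OF g, of h] by simp
  show ?thesis unfolding M_def[symmetric]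
  proof
    assume d: "Determinant.det M \<noteq> 0"
    show "indep_on J I (\<lambda>c e. A e c)" unfolding indep_on_def
    proof (intro allI impI ballI)
      fix l c assume l: "\<forall>e\<in>I. (\<Sum>c\<in>J. l c * A e c) = 0" and c: "c \<in> J"
      define v where "v = vec s (\<lambda>b. l (g b))"
      have vc: "v \<in> carrier_vec s" unfolding v_def by simp
      have "M *\<^sub>v v = 0\<^sub>v s"
      proof (rule eq_vecI)
        fix a assume "a < dim_vec (0\<^sub>v s)"
        then have a: "a < s" by simp
        have "f a \<in> I" using f a by (auto simp: bij_betw_def)
        then have "(\<Sum>b\<in>{0..<s}. l (g b) * A (f a) (g b)) = 0" using l reidx[of "\<lambda>c. l c * A (f a) c"] by simp
        then show "(M *\<^sub>v v) $ a = 0\<^sub>v s $ a" using Mv[OF a vc] a by (simp add: v_def mult.commute)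
      qed (use M in simp)
      then have "v = 0\<^sub>v s" using d det_0_iff_vec_prod_zero[OF M] vc by blast
      moreover obtain b where "b < s" "g b = c" using g c by (auto simp: bij_betw_def)
      ultimately show "l c = 0" unfolding v_def by (metis index_vec index_zero_vec(1))
    qed
  next
    assume ind: "indep_on J I (\<lambda>c e. A e c)"
    show "Determinant.det M \<noteq> 0"
    proof
      assume "Determinant.det M = 0"
      then obtain v where v: "v \<in> carrier_vec s" "v \<noteq> 0\<^sub>v s" "M *\<^sub>v v = 0\<^sub>v s"
        using det_0_iff_vec_prod_zero[OF M] by blast
      define l where "l c = v $ (the_inv_into {0..<s} g c)" for c
      have lg: "l (g b) = v $ b" if "b < s" for b
        unfolding l_def using g that by (simp add: bij_betw_def the_inv_into_f_f)
      have "\<forall>e\<in>I. (\<Sum>c\<in>J. l c * A e c) = 0"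
      proof
        fix e assume "e \<in> I"
        then obtain a where a: "a < s" "f a = e" using f by (auto simp: bij_betw_def)
        have "(\<Sum>c\<in>J. l c * A e c) = (\<Sum>b\<in>{0..<s}. A (f a) (g b) * v $ b)"
          unfolding reidx using a lg by (auto intro!: sum.cong)
        also have "\<dots> = 0" using Mv[OF a(1) v(1)] v(3) a by simp
        finally show "(\<Sum>c\<in>J. l c * A e c) = 0" .
      qed
      then have "\<forall>c\<in>J. l c = 0" using ind unfolding indep_on_def by blast
      then have "v = 0\<^sub>v s" using lg g v(1) by (intro eq_vecI) (auto simp: bij_betw_def)
      then show False using v(2) by simp
    qed
  qed
qed

lemma det_polyfun:
  assumes "\<And>a b. a < s \<Longrightarrow> b < s \<Longrightarrow> polyfun V (\<lambda>x. F x a b)"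
  shows "polyfun V (\<lambda>x. Determinant.det (mat s s (\<lambda>(a,b). F x a b)))"
proof (rule polyfun_cong)
  show "polyfun V (\<lambda>x. \<Sum>p\<in>{p. p permutes {0..<s}}. of_int (sign p) * (\<Prod>i\<in>{0..<s}. F x i (p i)))"
  proof (rule polyfun_sum)
    show "finite {p. p permutes {0..<s}}" by (simp add: finite_permutations)
    fix p assume "p \<in> {p. p permutes {0..<s}}"
    then have p: "p permutes {0..<s}" by simp
    show "polyfun V (\<lambda>x. of_int (sign p) * (\<Prod>i\<in>{0..<s}. F x i (p i)))"
      by (intro polyfun_mult polyfun_of_int polyfun_prod assms)
         (use permutes_in_image[OF p] in auto)
  qed
  fix x
  show "(\<Sum>p\<in>{p. p permutes {0..<s}}. of_int (sign p) * (\<Prod>i\<in>{0..<s}. F x i (p i))) =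
        Determinant.det (mat s s (\<lambda>(a,b). F x a b))"
    unfolding Determinant.det_def
    by (auto intro!: sum.cong prod.cong simp: permutes_in_image)
qed

interpretation VS: vector_space cscale
  by unfold_locales (auto simp: cscale_def fun_eq_iff algebra_simps plus_fun_def)

lemma sum_fun_app: "(\<Sum>b\<in>B. F b) w j = (\<Sum>b\<in>B. (F b :: nat \<Rightarrow> nat \<Rightarrow> complex) w j)"
  by (induction B rule: infinite_finite_induct) auto

lemma sum_cscale_app: "(\<Sum>b\<in>B. cscale (l b) (F b)) w j = (\<Sum>b\<in>B. l b * F b w j)"
  unfolding sum_fun_app by (simp add: cscale_def)

definition boxed :: "(nat \<times> nat) set \<Rightarrow> (nat \<Rightarrow> nat \<Rightarrow> complex) \<Rightarrow> bool" where
  "boxed Cl m \<longleftrightarrow> (\<forall>w j. (w, j) \<notin> Cl \<longrightarrow> m w j = 0)"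

definition uc :: "(nat \<Rightarrow> nat \<Rightarrow> complex) \<Rightarrow> nat \<times> nat \<Rightarrow> complex" where
  "uc m c = m (fst c) (snd c)"

definition unitv :: "nat \<times> nat \<Rightarrow> nat \<Rightarrow> nat \<Rightarrow> complex" where
  "unitv c = (\<lambda>w j. if (w, j) = c then 1 else 0)"

definition gker :: "(nat \<times> nat) set \<Rightarrow> 'r set \<Rightarrow> ('r \<Rightarrow> nat \<times> nat \<Rightarrow> complex) \<Rightarrow> (nat \<Rightarrow> nat \<Rightarrow> complex) set" where
  "gker Cl Rw A = {m. boxed Cl m \<and> (\<forall>e\<in>Rw. (\<Sum>c\<in>Cl. A e c * uc m c) = 0)}"

lemma boxed_span:
  assumes "finite Cl" "boxed Cl m"
  shows "m \<in> VS.span (unitv ` Cl)"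
proof -
  have "m = (\<Sum>c\<in>Cl. cscale (uc m c) (unitv c))"
  proof (intro ext)
    fix w j
    show "m w j = (\<Sum>c\<in>Cl. cscale (uc m c) (unitv c)) w j"
      unfolding sum_cscale_app using assms
      by (cases "(w, j) \<in> Cl") (auto simp: unitv_def uc_def boxed_def if_distrib[of "\<lambda>z. _ * z"] sum.delta' cong: if_cong)
  qed
  also have "\<dots> \<in> VS.span (unitv ` Cl)"
    by (intro VS.span_sum VS.span_scale VS.span_base) auto
  finally show ?thesis .
qed

lemma boxed_basis:
  assumes "finite Cl" "\<And>m. m \<in> W \<Longrightarrow> boxed Cl m"
  obtains B where "B \<subseteq> W" "VS.independent B" "W \<subseteq> VS.span B" "finite B" "card B = VS.dim W"
proof -
  obtain B where B: "B \<subseteq> W" "VS.independent B" "W \<subseteq> VS.span B" "card B = VS.dim W"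
    using VS.basis_exists by blast
  have "B \<subseteq> VS.span (unitv ` Cl)" using B(1) assms boxed_span by blast
  then have "finite B" using VS.independent_span_bound[of "unitv ` Cl" B] assms(1) B(2) by auto
  then show ?thesis using B that by blast
qed

lemma boxed_card_le:
  assumes "finite Cl" "\<And>m. m \<in> W \<Longrightarrow> boxed Cl m" "VS.independent B" "B \<subseteq> VS.span W"
  shows "finite B \<and> card B \<le> VS.dim W"
proof -
  obtain BW where BW: "BW \<subseteq> W" "VS.independent BW" "W \<subseteq> VS.span BW" "finite BW" "card BW = VS.dim W"
    using boxed_basis[OF assms(1,2)] by blast
  have "VS.span W \<subseteq> VS.span BW" using BW(3) VS.span_minimal VS.subspace_span by blast
  then show ?thesis using VS.independent_span_bound[OF BW(4) assms(3)] assms(4) BW(5) by auto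
qed

lemma gker_subspace: "VS.subspace (gker Cl Rw A)"
proof -
  have sc: "(\<Sum>c\<in>Cl. A e c * uc (cscale k m) c) = k * (\<Sum>c\<in>Cl. A e c * uc m c)" for e k m
    by (simp add: uc_def cscale_def sum_distrib_left algebra_simps)
  have ad: "(\<Sum>c\<in>Cl. A e c * uc (m + m') c) = (\<Sum>c\<in>Cl. A e c * uc m c) + (\<Sum>c\<in>Cl. A e c * uc m' c)" for e m m'
    by (simp add: uc_def sum.distrib algebra_simps)
  have b1: "boxed Cl (cscale k m)" if "boxed Cl m" for k m using that by (simp add: boxed_def cscale_def)
  have b2: "boxed Cl (m + m')" if "boxed Cl m" "boxed Cl m'" for m m' using that by (simp add: boxed_def)
  have b0: "boxed Cl 0" by (simp add: boxed_def)
  have z: "uc 0 c = 0" for c by (simp add: uc_def)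
  show ?thesis
    unfolding VS.subspace_def gker_def
    by (auto simp: sc ad b0 b1 b2 z)
qed

lemma gker_boxed: "m \<in> gker Cl Rw A \<Longrightarrow> boxed Cl m"
  unfolding gker_def by simp

lemma lemmaG:
  fixes A :: "(nat \<Rightarrow> nat \<Rightarrow> complex) \<Rightarrow> 'r \<Rightarrow> nat \<times> nat \<Rightarrow> complex"
  assumes fC: "finite Cl" and fR: "finite Rw"
  and poly: "\<And>e c. e \<in> Rw \<Longrightarrow> c \<in> Cl \<Longrightarrow> polyfun V (\<lambda>x. A x e c)"
  and gen: "alg_indep_Q V (\<lambda>(w, j). x w j)"
  shows "VS.dim (gker Cl Rw (A x)) \<le> VS.dim (gker Cl Rw (A y))"
proof -
  define Ky where "Ky = gker Cl Rw (A y)"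
  define Kx where "Kx = gker Cl Rw (A x)"
  obtain B where B: "B \<subseteq> Ky" "VS.independent B" "Ky \<subseteq> VS.span B" "finite B" "card B = VS.dim Ky"
    using boxed_basis[OF fC, of Ky] gker_boxed unfolding Ky_def by blast
  have Bbox: "b \<in> B \<Longrightarrow> boxed Cl b" for b using B(1) gker_boxed unfolding Ky_def by blast
  have ind1: "indep_on B Cl (\<lambda>b c. uc b c)"
    unfolding indep_on_def
  proof (intro allI impI)
    fix l assume l: "\<forall>c\<in>Cl. (\<Sum>b\<in>B. l b * uc b c) = 0"
    have "(\<Sum>b\<in>B. cscale (l b) b) = 0"
    proof (intro ext)
      fix w j
      show "(\<Sum>b\<in>B. cscale (l b) b) w j = 0 w j"
      proof (cases "(w, j) \<in> Cl")
        case True then show ?thesis using l unfolding sum_cscale_app uc_def by force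
      next
        case False then have "\<forall>b\<in>B. l b * b w j = 0" using Bbox unfolding boxed_def by auto
        then show ?thesis unfolding sum_cscale_app zero_fun_def by (simp add: sum.neutral)
      qed
    qed
    then show "\<forall>b\<in>B. l b = 0" using B(2,4) unfolding VS.independent_explicit_module by blast
  qed
  obtain J' where J': "J' \<subseteq> Cl" "card J' = card B" "indep_on B J' (\<lambda>b c. uc b c)"
    using lemmaC[OF B(4) fC ind1] by blast
  define J where "J = Cl - J'"
  have fJ: "finite J" using fC by (simp add: J_def)
  have fJ': "finite J'" using fC J'(1) finite_subset by blast
  have ind2: "indep_on J Rw (\<lambda>c e. A y e c)"
    unfolding indep_on_def
  proof (intro allI impI)
    fix l assume l: "\<forall>e\<in>Rw. (\<Sum>c\<in>J. l c * A y e c) = 0"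
    define m where "m = (\<lambda>w j. if (w, j) \<in> J then l (w, j) else 0)"
    have "m \<in> Ky" unfolding Ky_def gker_def
    proof (intro CollectI conjI ballI)
      show "boxed Cl m" unfolding boxed_def m_def J_def by auto
      fix e assume e: "e \<in> Rw"
      have "(\<Sum>c\<in>Cl. A y e c * uc m c) = (\<Sum>c\<in>J. A y e c * uc m c)"
        by (rule sum.mono_neutral_right) (auto simp: fC J_def m_def uc_def)
      also have "\<dots> = (\<Sum>c\<in>J. l c * A y e c)"
        by (rule sum.cong) (auto simp: m_def uc_def mult.commute)
      finally show "(\<Sum>c\<in>Cl. A y e c * uc m c) = 0" using l e by simp
    qed
    then have "m \<in> VS.span B" using B(3) by blast
    then obtain u where u: "m = (\<Sum>b\<in>B. cscale (u b) b)" using VS.span_finite[OF B(4)] by auto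
    have "\<forall>c\<in>J'. (\<Sum>b\<in>B. u b * uc b c) = 0"
    proof
      fix c assume "c \<in> J'"
      then have "uc m c = 0" unfolding m_def uc_def J_def by auto
      then show "(\<Sum>b\<in>B. u b * uc b c) = 0" unfolding u uc_def sum_cscale_app .
    qed
    then have "\<forall>b\<in>B. u b = 0" using J'(3) unfolding indep_on_def by blast
    then have "\<forall>b\<in>B. cscale (u b) b = 0" by (simp add: cscale_def fun_eq_iff)
    then have "m = 0" unfolding u by (simp add: sum.neutral)
    then show "\<forall>c\<in>J. l c = 0" unfolding m_def by (auto simp: fun_eq_iff) (metis (mono_tags))
  qed
  obtain I where I: "I \<subseteq> Rw" "card I = card J" "indep_on J I (\<lambda>c e. A y e c)"
    using lemmaC[OF fJ fR ind2] by blast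
  define s where "s = card J"
  have fI: "finite I" using I(1) fR finite_subset by blast
  obtain f where f: "bij_betw f {0..<s} I" using ex_bij_betw_nat_finite[OF fI] I(2) s_def by auto
  obtain g where g: "bij_betw g {0..<s} J" using ex_bij_betw_nat_finite[OF fJ] s_def by auto
  have dy: "Determinant.det (mat s s (\<lambda>(a,b). A y (f a) (g b))) \<noteq> 0"
    using det_indep[OF f g, of "A y"] I(3) by simp
  have pd: "polyfun V (\<lambda>x. Determinant.det (mat s s (\<lambda>(a,b). A x (f a) (g b))))"
  proof (rule det_polyfun)
    fix a b assume "a < s" "b < s"
    then have "f a \<in> Rw" "g b \<in> Cl" using f g I(1) by (auto simp: bij_betw_def J_def)
    then show "polyfun V (\<lambda>x. A x (f a) (g b))" using poly by blast
  qed
  have dx: "Determinant.det (mat s s (\<lambda>(a,b). A x (f a) (g b))) \<noteq> 0"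
    using polyfun_transfer[OF pd gen, of y] dy by blast
  have ind3: "indep_on J I (\<lambda>c e. A x e c)" using det_indep[OF f g, of "A x"] dx by simp
  obtain Bx where Bx: "Bx \<subseteq> Kx" "VS.independent Bx" "Kx \<subseteq> VS.span Bx" "finite Bx" "card Bx = VS.dim Kx"
    using boxed_basis[OF fC, of Kx] gker_boxed unfolding Kx_def by blast
  have Bxbox: "b \<in> Bx \<Longrightarrow> boxed Cl b" for b using Bx(1) gker_boxed unfolding Kx_def by blast
  have "card Bx \<le> card J'"
  proof (rule ccontr)
    assume "\<not> ?thesis"
    then have "card J' < card Bx" by simp
    then obtain l where l: "\<exists>b\<in>Bx. l b \<noteq> 0" "\<forall>c\<in>J'. (\<Sum>b\<in>Bx. uc b c * l b) = 0"
      using underdetermined[OF fJ' Bx(4), of "\<lambda>c b. uc b c"] by blast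
    define m where "m = (\<Sum>b\<in>Bx. cscale (l b) b)"
    have mK: "m \<in> Kx"
    proof -
      have "m \<in> VS.span Bx" unfolding m_def by (intro VS.span_sum VS.span_scale VS.span_base) auto
      also have "VS.span Bx \<subseteq> Kx" using Bx(1) gker_subspace VS.span_minimal unfolding Kx_def by blast
      finally show ?thesis .
    qed
    have mJ': "uc m c = 0" if "c \<in> J'" for c
      using l(2) that unfolding m_def uc_def sum_cscale_app by (simp add: mult.commute)
    have mbox: "boxed Cl m" using mK gker_boxed unfolding Kx_def by blast
    have "\<forall>e\<in>I. (\<Sum>c\<in>J. uc m c * A x e c) = 0"
    proof
      fix e assume e: "e \<in> I"
      have "(\<Sum>c\<in>J. uc m c * A x e c) = (\<Sum>c\<in>J. A x e c * uc m c)" by (simp add: mult.commute)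
      also have "\<dots> = (\<Sum>c\<in>Cl. A x e c * uc m c)"
        by (rule sum.mono_neutral_left) (auto simp: fC J_def mJ')
      also have "\<dots> = 0" using mK e I(1) unfolding Kx_def gker_def by auto
      finally show "(\<Sum>c\<in>J. uc m c * A x e c) = 0" .
    qed
    then have mJ: "uc m c = 0" if "c \<in> J" for c using ind3 that unfolding indep_on_def by blast
    have "m = 0"
    proof (intro ext)
      fix w j
      show "m w j = 0 w j"
        using mJ[of "(w,j)"] mJ'[of "(w,j)"] mbox unfolding boxed_def uc_def J_def by auto
    qed
    then have "\<forall>b\<in>Bx. l b = 0" using Bx(2,4) unfolding m_def VS.independent_explicit_module by blast
    then show False using l(1) by blast
  qed
  then show ?thesis using Bx(5) J'(2) B(5) unfolding Kx_def Ky_def by simp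
qed

lemma gker_sum_eq:
  assumes "boxed Cl' m" "Cl' \<subseteq> Cl" "finite Cl"
  shows "(\<Sum>c\<in>Cl. A e c * uc m c) = (\<Sum>c\<in>Cl'. A e c * uc m c)"
  by (rule sum.mono_neutral_right[symmetric, symmetric])
     (use assms in \<open>auto simp: boxed_def uc_def\<close>)

lemma gker_mono:
  assumes "Cl' \<subseteq> Cl" "finite Cl"
  shows "gker Cl' Rw A \<subseteq> gker Cl Rw A"
proof
  fix m assume m: "m \<in> gker Cl' Rw A"
  then have "boxed Cl' m" by (simp add: gker_def)
  then show "m \<in> gker Cl Rw A"
    using m assms gker_sum_eq[of Cl' m Cl A] unfolding gker_def boxed_def by auto
qed

lemma gker_Int:
  assumes "finite Cl1" "finite Cl2"
  shows "gker Cl1 Rw A \<inter> gker Cl2 Rw A = gker (Cl1 \<inter> Cl2) Rw A"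
proof (intro equalityI subsetI)
  fix m assume m: "m \<in> gker Cl1 Rw A \<inter> gker Cl2 Rw A"
  then have b: "boxed (Cl1 \<inter> Cl2) m" by (auto simp: gker_def boxed_def)
  show "m \<in> gker (Cl1 \<inter> Cl2) Rw A"
    using m gker_sum_eq[OF b _ assms(1), of A] b unfolding gker_def by auto
next
  fix m assume "m \<in> gker (Cl1 \<inter> Cl2) Rw A"
  then show "m \<in> gker Cl1 Rw A \<inter> gker Cl2 Rw A"
    using gker_mono[OF Int_lower1 assms(1)] gker_mono[OF Int_lower2 assms(2)] by blast
qed

lemma dim_mono_boxed:
  assumes "finite Cl" "\<And>m. m \<in> W \<Longrightarrow> boxed Cl m" "U \<subseteq> W"
  shows "VS.dim U \<le> VS.dim W"
proof -
  obtain B where B: "B \<subseteq> U" "VS.independent B" "U \<subseteq> VS.span B" "finite B" "card B = VS.dim U"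
    using boxed_basis[OF assms(1), of U] assms by blast
  have "B \<subseteq> VS.span W" using B(1) assms(3) VS.span_superset by blast
  then show ?thesis using boxed_card_le[OF assms(1,2) B(2)] B(5) by simp
qed

lemma indep_union:
  assumes "VS.independent X" "VS.independent Y" "finite X" "finite Y" "X \<inter> Y = {}"
    and sp: "\<And>v. v \<in> VS.span X \<Longrightarrow> v \<in> VS.span Y \<Longrightarrow> v = 0"
  shows "VS.independent (X \<union> Y)"
proof (rule VS.independent_if_scalars_zero)
  show "finite (X \<union> Y)" using assms by simp
  fix f x assume s: "(\<Sum>x\<in>X \<union> Y. cscale (f x) x) = 0" and x: "x \<in> X \<union> Y"
  define a where "a = (\<Sum>x\<in>X. cscale (f x) x)"
  define b where "b = (\<Sum>x\<in>Y. cscale (f x) x)"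
  have "(\<Sum>x\<in>X \<union> Y. cscale (f x) x) = a + b" unfolding a_def b_def by (rule sum.union_disjoint[OF assms(3,4,5)])
  then have ab: "a + b = 0" using s by simp
  have "a \<in> VS.span X" unfolding a_def by (intro VS.span_sum VS.span_scale VS.span_base) auto
  moreover have "a \<in> VS.span Y"
  proof -
    have "a = - b" using ab by (simp add: eq_neg_iff_add_eq_0)
    moreover have "b \<in> VS.span Y" unfolding b_def by (intro VS.span_sum VS.span_scale VS.span_base) auto
    ultimately show ?thesis using VS.span_neg by simp
  qed
  ultimately have a0: "a = 0" using sp by blast
  then have b0: "b = 0" using ab by simp
  show "f x = 0"
  proof (cases "x \<in> X")
    case True then show ?thesis using VS.independentD[OF assms(1) assms(3) order_refl] a0 unfolding a_def by blast
  next
    case False then have "x \<in> Y" using x by blast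
    then show ?thesis using VS.independentD[OF assms(2) assms(4) order_refl] b0 unfolding b_def by blast
  qed
qed

lemma indep_disj_span:
  assumes "VS.independent (X \<union> Y)" "finite X" "finite Y" "X \<inter> Y = {}"
    and v: "v \<in> VS.span X" "v \<in> VS.span Y"
  shows "v = 0"
proof -
  obtain a where a: "v = (\<Sum>x\<in>X. cscale (a x) x)" using v(1) VS.span_finite[OF assms(2)] by auto
  obtain b where b: "v = (\<Sum>x\<in>Y. cscale (b x) x)" using v(2) VS.span_finite[OF assms(3)] by auto
  define g where "g z = (if z \<in> X then a z else - b z)" for z
  have "(\<Sum>z\<in>X \<union> Y. cscale (g z) z) = (\<Sum>z\<in>X. cscale (g z) z) + (\<Sum>z\<in>Y. cscale (g z) z)"
    by (rule sum.union_disjoint) (use assms in auto)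
  also have "(\<Sum>z\<in>X. cscale (g z) z) = v" unfolding a g_def by simp
  also have "(\<Sum>z\<in>Y. cscale (g z) z) = (\<Sum>z\<in>Y. - cscale (b z) z)"
    using assms(4) by (intro sum.cong) (auto simp: g_def VS.scale_minus_left)
  also have "\<dots> = - v" unfolding b by (simp add: sum_negf)
  finally have "(\<Sum>z\<in>X \<union> Y. cscale (g z) z) = 0" by (simp add: fun_eq_iff)
  then have "\<forall>z\<in>X \<union> Y. g z = 0" using VS.independentD[OF assms(1) _ order_refl] assms(2,3) by blast
  then have "\<forall>x\<in>X. a x = 0" unfolding g_def by (metis UnI1)
  then show ?thesis unfolding a by simp
qed

lemma count_lemma:
  assumes fC: "finite Cl" and K2b: "\<And>m. m \<in> K2 \<Longrightarrow> boxed Cl m"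
    and sub: "Sa \<subseteq> K2" "Sb \<subseteq> K2" and ssa: "VS.subspace Sa" and ssb: "VS.subspace Sb"
    and K0: "K0 = Sa \<inter> Sb" and w0: "w0 \<in> K2"
    and nw: "\<And>m1 m2. m1 \<in> Sa \<Longrightarrow> m2 \<in> Sb \<Longrightarrow> w0 \<noteq> m1 + m2"
  shows "VS.dim Sa + VS.dim Sb + 1 \<le> VS.dim K2 + VS.dim K0"
proof -
  have K0b: "m \<in> K0 \<Longrightarrow> boxed Cl m" for m using K0 sub K2b by blast
  have ss0: "VS.subspace K0" unfolding K0 using ssa ssb VS.subspace_inter by blast
  obtain B0 where B0: "B0 \<subseteq> K0" "VS.independent B0" "K0 \<subseteq> VS.span B0" "finite B0" "card B0 = VS.dim K0"
    using boxed_basis[OF fC, of K0] K0b by blast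
  obtain Ba where Ba: "B0 \<subseteq> Ba" "Ba \<subseteq> Sa" "VS.independent Ba" "Sa \<subseteq> VS.span Ba"
    using VS.maximal_independent_subset_extend[of B0 Sa] B0 K0 by blast
  obtain Bb where Bb: "B0 \<subseteq> Bb" "Bb \<subseteq> Sb" "VS.independent Bb" "Sb \<subseteq> VS.span Bb"
    using VS.maximal_independent_subset_extend[of B0 Sb] B0 K0 by blast
  have cBa: "card Ba = VS.dim Sa" using VS.basis_card_eq_dim Ba by blast
  have cBb: "card Bb = VS.dim Sb" using VS.basis_card_eq_dim Bb by blast
  have fBa: "finite Ba" using boxed_card_le[OF fC K2b Ba(3)] Ba(2) sub(1) VS.span_superset by blast
  have fBb: "finite Bb" using boxed_card_le[OF fC K2b Bb(3)] Bb(2) sub(2) VS.span_superset by blast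
  have spa: "VS.span Ba \<subseteq> Sa" using Ba(2) ssa VS.span_minimal by blast
  have spb: "VS.span Bb \<subseteq> Sb" using Bb(2) ssb VS.span_minimal by blast
  have sp0: "VS.span B0 = K0" using B0 ss0 VS.span_subspace by blast
  have w0a: "w0 \<notin> Sa" using nw[of w0 0] VS.subspace_0[OF ssb] by auto
  have w0b: "w0 \<notin> Sb" using nw[of 0 w0] VS.subspace_0[OF ssa] by auto
  have dis1: "Ba \<inter> (Bb - B0) = {}"
  proof (rule ccontr)
    assume "Ba \<inter> (Bb - B0) \<noteq> {}"
    then obtain x where x: "x \<in> Ba" "x \<in> Bb" "x \<notin> B0" by blast
    then have "x \<in> K0" using K0 Ba(2) Bb(2) by blast
    then have "x \<in> VS.span B0" using B0(3) by blast
    moreover have "VS.span B0 \<subseteq> VS.span (Ba - {x})" using Ba(1) x(3) by (intro VS.span_mono) blast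
    ultimately have "VS.dependent Ba" unfolding VS.dependent_def using x(1) by blast
    then show False using Ba(3) by blast
  qed
  define Y where "Y = insert w0 (Bb - B0)"
  have w0n: "w0 \<notin> Bb - B0" using w0b Bb(2) by blast
  have fY: "finite Y" using fBb by (simp add: Y_def)
  have indY: "VS.independent Y" unfolding Y_def
  proof (rule VS.independent_insertI)
    have "VS.span (Bb - B0) \<subseteq> VS.span Bb" by (rule VS.span_mono) blast
    then show "w0 \<notin> VS.span (Bb - B0)" using spb w0b by blast
    show "VS.independent (Bb - B0)" using Bb(3) VS.independent_mono by blast
  qed
  have disY: "Ba \<inter> Y = {}" using dis1 w0a Ba(2) by (auto simp: Y_def)
  have spY: "v = 0" if v1: "v \<in> VS.span Ba" and v2: "v \<in> VS.span Y" for v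
  proof -
    obtain k where k: "v - cscale k w0 \<in> VS.span (Bb - B0)" using v2 unfolding Y_def VS.span_insert by blast
    define y where "y = v - cscale k w0"
    have ySb: "y \<in> Sb" using k spb VS.span_mono[of "Bb - B0" Bb] unfolding y_def by blast
    have vSa: "v \<in> Sa" using v1 spa by blast
    have k0: "k = 0"
    proof (rule ccontr)
      assume k0: "k \<noteq> 0"
      have "w0 = cscale (1/k) v + cscale (-(1/k)) y"
        using k0 unfolding y_def by (simp add: cscale_def fun_eq_iff field_simps)
      moreover have "cscale (1/k) v \<in> Sa" using vSa ssa VS.subspace_scale by blast
      moreover have "cscale (-(1/k)) y \<in> Sb" using ySb ssb VS.subspace_scale by blast
      ultimately show False using nw by blast
    qed
    then have vy: "v = y" unfolding y_def by (simp add: cscale_def zero_fun_def)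
    then have "v \<in> K0" using vSa ySb K0 by blast
    then have "v \<in> VS.span B0" using sp0 by blast
    moreover have "v \<in> VS.span (Bb - B0)" using k vy unfolding y_def by simp
    moreover have "B0 \<union> (Bb - B0) = Bb" using Bb(1) by blast
    ultimately show "v = 0"
      using indep_disj_span[of B0 "Bb - B0" v] Bb(3) B0(4) fBb by auto
  qed
  have indT: "VS.independent (Ba \<union> Y)" using indep_union[OF Ba(3) indY fBa fY disY spY] by blast
  have TK2: "Ba \<union> Y \<subseteq> VS.span K2"
    using Ba(2) Bb(2) sub w0 VS.span_superset unfolding Y_def by blast
  have "card (Ba \<union> Y) \<le> VS.dim K2" using boxed_card_le[OF fC K2b indT TK2] by blast
  moreover have "card (Ba \<union> Y) = card Ba + card Y" using card_Un_disjoint[OF fBa fY disY] .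
  moreover have "card Y = card Bb - card B0 + 1"
    using w0n fBb B0(4) Bb(1) by (simp add: Y_def card_Diff_subset)
  moreover have "card B0 \<le> card Bb" using Bb(1) fBb card_mono by blast
  ultimately show ?thesis using cBa cBb B0(5) by linarith
qed

definition box :: "nat \<Rightarrow> nat \<Rightarrow> (nat \<times> nat) set" where
  "box n k = {0..<n} \<times> {0..<k}"

definition RM :: "(nat \<Rightarrow> nat \<Rightarrow> complex) \<Rightarrow> nat \<times> nat \<Rightarrow> nat \<times> nat \<Rightarrow> complex" where
  "RM p e c = rig_entry p e (fst c) (snd c)"

lemma finite_box[simp]: "finite (box n k)" by (simp add: box_def)

lemma inf_motions_gker: "inf_motions n E k p = gker (box n k) E (RM p)"
proof -
  have s: "(\<Sum>w<n. \<Sum>j<k. rig_entry p e w j * m w j) = (\<Sum>c\<in>box n k. RM p e c * uc m c)" for e m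
    unfolding box_def RM_def uc_def atLeast0LessThan sum.cartesian_product by (simp add: split_beta)
  show ?thesis unfolding inf_motions_def gker_def boxed_def s by (auto simp: box_def)
qed

lemma row_sum:
  assumes "u < n" "v < n" "u \<noteq> v"
  shows "(\<Sum>c\<in>box n k. RM p (u, v) c * uc m c) = (\<Sum>j<k. (p u j - p v j) * (m u j - m v j))"
proof -
  have inner: "(\<Sum>w<n. rig_entry p (u, v) w j * m w j) = (p u j - p v j) * (m u j - m v j)" for j
  proof -
    have "(\<Sum>w<n. rig_entry p (u, v) w j * m w j) =
          (\<Sum>w<n. (if w = u then (p u j - p v j) * m u j else 0) + (if w = v then (p v j - p u j) * m v j else 0))"
      using assms(3) by (intro sum.cong) (auto simp: rig_entry_def)
    also have "\<dots> = (p u j - p v j) * m u j + (p v j - p u j) * m v j"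
      using assms by (simp add: sum.distrib)
    finally show ?thesis by (simp add: algebra_simps)
  qed
  have "(\<Sum>c\<in>box n k. RM p (u, v) c * uc m c) = (\<Sum>w<n. \<Sum>j<k. rig_entry p (u, v) w j * m w j)"
    unfolding box_def RM_def uc_def atLeast0LessThan sum.cartesian_product by (simp add: split_beta)
  also have "\<dots> = (\<Sum>j<k. \<Sum>w<n. rig_entry p (u, v) w j * m w j)" by (rule sum.swap)
  also have "\<dots> = (\<Sum>j<k. (p u j - p v j) * (m u j - m v j))" by (simp add: inner)
  finally show ?thesis .
qed

lemma polyfun_RM:
  assumes "fst e < n" "snd e < n" "snd c < K"
  shows "polyfun (box n K) (\<lambda>x. RM x e c)"
proof -
  have v1: "polyfun (box n K) (\<lambda>x. x (fst e) (snd c))" "polyfun (box n K) (\<lambda>x. x (snd e) (snd c))"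
    using assms by (auto intro!: polyfun_var simp: box_def)
  show ?thesis
  proof (cases "fst c = fst e")
    case True then show ?thesis unfolding RM_def rig_entry_def using polyfun_diff[OF v1] by simp
  next
    case False
    show ?thesis
    proof (cases "fst c = snd e")
      case True then show ?thesis unfolding RM_def rig_entry_def using False polyfun_diff[OF v1(2) v1(1)] by simp
    next
      case False2: False
      then show ?thesis unfolding RM_def rig_entry_def using False polyfun_of_int[of _ 0] by simp
    qed
  qed
qed

lemma alg_indep_subset:
  assumes "alg_indep_Q J x" "J' \<subseteq> J" "finite J"
  shows "alg_indep_Q J' x"
  unfolding alg_indep_Q_def
proof (intro allI impI)
  fix S :: "('a \<Rightarrow> nat) set" and c :: "('a \<Rightarrow> nat) \<Rightarrow> rat"
  assume h: "finite S \<and> (\<forall>m\<in>S. \<forall>t. t \<notin> J' \<longrightarrow> m t = 0) \<and>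
     (\<Sum>m\<in>S. of_rat (c m) * (\<Prod>t\<in>J'. x t ^ m t)) = 0"
  have pe: "(\<Prod>t\<in>J. x t ^ m t) = (\<Prod>t\<in>J'. x t ^ m t)" if "m \<in> S" for m
    using h that assms(2,3) by (intro prod.mono_neutral_right) auto
  have "(\<Sum>m\<in>S. of_rat (c m) * (\<Prod>t\<in>J. x t ^ m t)) = 0"
    using h by (simp add: pe cong: sum.cong)
  then have P: "finite S \<and> (\<forall>m\<in>S. \<forall>t. t \<notin> J \<longrightarrow> m t = 0) \<and>
     (\<Sum>m\<in>S. of_rat (c m) * (\<Prod>t\<in>J. x t ^ m t)) = 0" using h assms(2) by auto
  show "\<forall>m\<in>S. c m = 0"
    using assms(1)[unfolded alg_indep_Q_def, THEN spec[where x=S], THEN spec[where x=c], THEN mp, OF P] .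
qed

lemma of_real_of_rat_c: "complex_of_real (of_rat q) = of_rat q"
  by (cases q) (simp add: of_rat_rat)

lemma alg_indep_of_real:
  assumes "alg_indep_Q J (x :: 'a \<Rightarrow> real)"
  shows "alg_indep_Q J (\<lambda>t. complex_of_real (x t))"
  unfolding alg_indep_Q_def
proof (intro allI impI)
  fix S :: "('a \<Rightarrow> nat) set" and c :: "('a \<Rightarrow> nat) \<Rightarrow> rat"
  assume h: "finite S \<and> (\<forall>m\<in>S. \<forall>t. t \<notin> J \<longrightarrow> m t = 0) \<and>
     (\<Sum>m\<in>S. of_rat (c m) * (\<Prod>t\<in>J. complex_of_real (x t) ^ m t)) = 0"
  have e: "(\<Sum>m\<in>S. of_rat (c m) * (\<Prod>t\<in>J. complex_of_real (x t) ^ m t)) =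
        complex_of_real (\<Sum>m\<in>S. of_rat (c m) * (\<Prod>t\<in>J. x t ^ m t))"
    by (simp add: of_real_sum of_real_prod of_real_of_rat_c)
  from h have h3: "(\<Sum>m\<in>S. of_rat (c m) * (\<Prod>t\<in>J. complex_of_real (x t) ^ m t)) = 0" by blast
  have "complex_of_real (\<Sum>m\<in>S. of_rat (c m) * (\<Prod>t\<in>J. x t ^ m t)) = 0"
    by (rule trans[OF e[symmetric] h3])
  then have "(\<Sum>m\<in>S. of_rat (c m) * (\<Prod>t\<in>J. x t ^ m t)) = 0" by (simp only: of_real_eq_0_iff)
  then have P: "finite S \<and> (\<forall>m\<in>S. \<forall>t. t \<notin> J \<longrightarrow> m t = 0) \<and>
     (\<Sum>m\<in>S. of_rat (c m) * (\<Prod>t\<in>J. x t ^ m t)) = 0" using h by auto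
  show "\<forall>m\<in>S. c m = 0"
    using assms[unfolded alg_indep_Q_def, THEN spec[where x=S], THEN spec[where x=c], THEN mp, OF P] .
qed

lemma dim_image_le:
  assumes fC: "finite Cl" and Wb: "\<And>m. m \<in> W \<Longrightarrow> boxed Cl m"
    and add: "\<And>a b. f (a + b) = f a + f b" and sc: "\<And>k a. f (cscale k a) = cscale k (f a)"
  shows "VS.dim (f ` W) \<le> VS.dim W"
proof -
  obtain B where B: "B \<subseteq> W" "VS.independent B" "W \<subseteq> VS.span B" "finite B" "card B = VS.dim W"
    using boxed_basis[OF fC Wb] by blast
  have f0: "f 0 = 0" using add[of 0 0] by simp
  have fs: "f (\<Sum>b\<in>T. g b) = (\<Sum>b\<in>T. f (g b))" for T g
  proof (induction T rule: infinite_finite_induct)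
    case (infinite A) then show ?case using f0 by (metis sum.infinite)
  next
    case empty show ?case using f0 by (metis sum.empty)
  next
    case (insert x F) then show ?case by (metis add sum.insert)
  qed
  have "f ` W \<subseteq> VS.span (f ` B)"
  proof
    fix y assume "y \<in> f ` W"
    then obtain w where w: "w \<in> W" "y = f w" by blast
    then obtain u where "w = (\<Sum>b\<in>B. cscale (u b) b)" using B(3) VS.span_finite[OF B(4)] by auto
    then have "y = (\<Sum>b\<in>B. cscale (u b) (f b))" using w(2) by (simp add: fs sc)
    also have "\<dots> \<in> VS.span (f ` B)" by (intro VS.span_sum VS.span_scale VS.span_base) auto
    finally show "y \<in> VS.span (f ` B)" .
  qed
  then have "VS.dim (f ` W) \<le> card (f ` B)" using VS.dim_le_card B(4) by blast
  also have "\<dots> \<le> card B" using B(4) card_image_le by blast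
  finally show ?thesis using B(5) by simp
qed

lemma stress_exists:
  fixes p0 :: "nat \<Rightarrow> nat \<Rightarrow> real" and c :: "nat \<times> nat \<Rightarrow> real"
  assumes sgE: "E \<subseteq> {(u, v). u < v \<and> v < n}" and fE: "finite E"
    and p0: "generic n D p0"
    and c: "\<forall>w<n. \<forall>j<D. (\<Sum>e\<in>E. c e * rig_entry p0 e w j) = 0" "e1 \<in> E" "c e1 \<noteq> 0"
    and iD: "i \<le> D"
  shows "\<exists>c'. boxed E c' \<and> (\<exists>e0\<in>E. uc c' e0 \<noteq> 0) \<and>
           (\<forall>w<n. \<forall>j<i. (\<Sum>e\<in>E. RM r e (w, j) * uc c' e) = 0)"
proof -
  define p0c where "p0c = (\<lambda>w j. complex_of_real (p0 w j))"
  have gen0: "alg_indep_Q (box n D) (\<lambda>(w, j). p0c w j)"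
  proof -
    have "alg_indep_Q (box n D) (\<lambda>t. complex_of_real ((\<lambda>(w, j). p0 w j) t))"
      using alg_indep_of_real p0 unfolding generic_def box_def by blast
    moreover have "(\<lambda>t. complex_of_real ((\<lambda>(w, j). p0 w j) t)) = (\<lambda>(w, j). p0c w j)"
      by (auto simp: p0c_def fun_eq_iff)
    ultimately show ?thesis by simp
  qed
  define AT where "AT x = (\<lambda>rw e. RM x e rw)" for x
  define cc where "cc = (\<lambda>u v. if (u, v) \<in> E then complex_of_real (c (u, v)) else 0)"
  have ucc: "uc cc e = complex_of_real (c e)" if "e \<in> E" for e
    using that by (simp add: cc_def uc_def)
  have RMc: "RM p0c e (w, j) = complex_of_real (rig_entry p0 e w j)" for e w j
    by (simp add: RM_def rig_entry_def p0c_def)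
  have ccK: "cc \<in> gker E (box n D) (AT p0c)"
    unfolding gker_def
  proof (intro CollectI conjI ballI)
    show "boxed E cc" by (simp add: boxed_def cc_def)
    fix rw assume rw: "rw \<in> box n D"
    obtain w j where wj: "rw = (w, j)" "w < n" "j < D" using rw by (auto simp: box_def)
    have "(\<Sum>e\<in>E. AT p0c rw e * uc cc e) = (\<Sum>e\<in>E. complex_of_real (c e * rig_entry p0 e w j))"
      by (rule sum.cong) (auto simp: AT_def wj RMc ucc mult.commute)
    also have "\<dots> = complex_of_real (\<Sum>e\<in>E. c e * rig_entry p0 e w j)" by (simp add: of_real_sum)
    also have "\<dots> = 0" using c(1) wj by simp
    finally show "(\<Sum>e\<in>E. AT p0c rw e * uc cc e) = 0" .
  qed
  have cc0: "cc \<noteq> 0"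
  proof
    assume "cc = 0"
    then have "uc cc e1 = 0" by (simp add: uc_def)
    then show False using ucc[OF c(2)] c(3) by simp
  qed
  have Kb: "\<And>m. m \<in> gker E (box n D) (AT p0c) \<Longrightarrow> boxed E m" using gker_boxed by blast
  have "card {cc} \<le> VS.dim (gker E (box n D) (AT p0c))"
    using boxed_card_le[of E "gker E (box n D) (AT p0c)" "{cc}", OF fE Kb] cc0 ccK VS.span_superset by auto
  also have "\<dots> \<le> VS.dim (gker E (box n D) (AT r))"
  proof (rule lemmaG[OF fE finite_box _ gen0])
    fix rw e assume "rw \<in> box n D" "e \<in> E"
    then show "polyfun (box n D) (\<lambda>x. AT x rw e)"
      unfolding AT_def using sgE by (intro polyfun_RM) (auto simp: box_def)
  qed
  finally have d1: "1 \<le> VS.dim (gker E (box n D) (AT r))" by simp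
  obtain c' where c': "c' \<in> gker E (box n D) (AT r)" "c' \<noteq> 0"
  proof (rule ccontr)
    assume "\<not> thesis"
    then have "gker E (box n D) (AT r) \<subseteq> VS.span {}" using that by (auto simp: VS.span_empty)
    then have "VS.dim (gker E (box n D) (AT r)) \<le> card ({} :: (nat \<Rightarrow> nat \<Rightarrow> complex) set)"
      using VS.dim_le_card[OF _ finite.emptyI] by blast
    then show False using d1 by simp
  qed
  have cb: "boxed E c'" using c'(1) gker_boxed by blast
  obtain w j where "c' w j \<noteq> 0" using c'(2) by (auto simp: fun_eq_iff)
  then have e0: "(w, j) \<in> E" "uc c' (w, j) \<noteq> 0" using cb by (auto simp: boxed_def uc_def)
  have rows: "\<forall>w<n. \<forall>j<i. (\<Sum>e\<in>E. RM r e (w, j) * uc c' e) = 0"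
  proof (intro allI impI)
    fix w j assume "w < n" "j < i"
    then have "(w, j) \<in> box n D" using iD by (simp add: box_def)
    then show "(\<Sum>e\<in>E. RM r e (w, j) * uc c' e) = 0" using c'(1) unfolding gker_def AT_def by auto
  qed
  show ?thesis using cb e0 rows by blast
qed

definition zf :: "(nat \<Rightarrow> nat \<Rightarrow> complex) \<Rightarrow> nat \<Rightarrow> nat \<times> nat \<Rightarrow> complex" where
  "zf x i e = (x (fst e) i - x (snd e) i) * (x (fst e) (Suc i) - x (snd e) (Suc i))"

definition Az :: "nat \<Rightarrow> (nat \<Rightarrow> nat \<Rightarrow> complex) \<Rightarrow> nat \<times> nat \<Rightarrow> nat \<times> nat \<Rightarrow> complex" where
  "Az i x e c = (if snd c < i then RM x e c else zf x i e)"

lemma Az_split: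
  "(\<Sum>c\<in>box n i \<union> {(0, i)}. Az i x e c * uc m c) = (\<Sum>c\<in>box n i. RM x e c * uc m c) + zf x i e * m 0 i"
proof -
  have "(\<Sum>c\<in>box n i \<union> {(0, i)}. Az i x e c * uc m c) = (\<Sum>c\<in>box n i. Az i x e c * uc m c) + Az i x e (0, i) * uc m (0, i)"
    by (subst sum.union_disjoint) (auto simp: box_def)
  also have "(\<Sum>c\<in>box n i. Az i x e c * uc m c) = (\<Sum>c\<in>box n i. RM x e c * uc m c)"
    by (rule sum.cong) (auto simp: Az_def box_def)
  finally show ?thesis by (simp add: Az_def uc_def)
qed

lemma ztrick:
  assumes sgE: "E \<subseteq> {(u, v). u < v \<and> v < n}" and fE: "finite E"
    and gen2: "alg_indep_Q (box n (i + 2)) (\<lambda>(w, j). r w j)"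
    and cb: "boxed E c'" and e0: "e0 \<in> E" "uc c' e0 \<noteq> 0"
    and st: "\<forall>w<n. \<forall>j<i. (\<Sum>e\<in>E. RM r e (w, j) * uc c' e) = 0"
  shows "\<not> (\<exists>m1. \<forall>e\<in>E. (\<Sum>c\<in>box n i. RM r e c * uc m1 c) + zf r i e = 0)"
proof
  assume "\<exists>m1. \<forall>e\<in>E. (\<Sum>c\<in>box n i. RM r e c * uc m1 c) + zf r i e = 0"
  then obtain m1 where m1: "\<forall>e\<in>E. (\<Sum>c\<in>box n i. RM r e c * uc m1 c) + zf r i e = 0" by blast
  obtain u0 v0 where uv0: "e0 = (u0, v0)" by (cases e0)
  have uv0E: "u0 < v0" "v0 < n" using e0(1) sgE uv0 by auto
  define Clz where "Clz = box n i \<union> {(0, i)}"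
  have fClz: "finite Clz" by (simp add: Clz_def)
  define y5 where "y5 = (\<lambda>w j. if j = i then (if w = u0 then 1 else 0)
      else if j = Suc i then (if w = v0 then 1 else 0) else r w j)"
  define K0 where "K0 = gker (box n i) E (RM r)"
  have RMy: "RM y5 e c = RM r e c" if "c \<in> box n i" for e c
  proof -
    have "snd c < i" using that by (auto simp: box_def)
    then show ?thesis by (simp add: RM_def rig_entry_def y5_def)
  qed
  have zy: "zf y5 i e = (if e = e0 then -1 else 0)" if eE: "e \<in> E" for e
  proof -
    obtain u v where uv: "e = (u, v)" "u < v" "v < n" using eE sgE by auto
    show ?thesis using uv uv0E unfolding zf_def y5_def uv0 by auto
  qed
  have claim1: "m 0 i = 0" if m: "m \<in> gker Clz E (Az i y5)" for m
  proof -
    have row: "(\<Sum>c\<in>box n i. RM r e c * uc m c) + zf y5 i e * m 0 i = 0" if "e \<in> E" for e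
      using m that Az_split[where x=y5 and e=e and m=m and n=n] RMy unfolding gker_def Clz_def
      by (auto simp: RMy cong: sum.cong)
    have "0 = (\<Sum>e\<in>E. uc c' e * ((\<Sum>c\<in>box n i. RM r e c * uc m c) + zf y5 i e * m 0 i))"
      using row by simp
    also have "\<dots> = (\<Sum>e\<in>E. \<Sum>c\<in>box n i. uc c' e * RM r e c * uc m c) + (\<Sum>e\<in>E. uc c' e * zf y5 i e) * m 0 i"
      by (simp add: distrib_left sum.distrib sum_distrib_left sum_distrib_right mult.assoc)
    also have "(\<Sum>e\<in>E. \<Sum>c\<in>box n i. uc c' e * RM r e c * uc m c) = (\<Sum>c\<in>box n i. uc m c * (\<Sum>e\<in>E. RM r e c * uc c' e))"
      by (subst sum.swap) (simp add: sum_distrib_left mult_ac)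
    also have "\<dots> = 0"
    proof (rule sum.neutral, rule ballI)
      fix c assume "c \<in> box n i"
      then obtain w j where "c = (w, j)" "w < n" "j < i" by (auto simp: box_def)
      then show "uc m c * (\<Sum>e\<in>E. RM r e c * uc c' e) = 0" using st by simp
    qed
    also have "(\<Sum>e\<in>E. uc c' e * zf y5 i e) = (\<Sum>e\<in>E. if e = e0 then - uc c' e0 else 0)"
      by (rule sum.cong) (auto simp: zy)
    also have "\<dots> = - uc c' e0"
      using e0(1) fE by (simp add: sum.delta sum.delta')
    finally show "m 0 i = 0" using e0(2) by simp
  qed
  have claim2: "gker Clz E (Az i y5) \<subseteq> K0"
  proof
    fix m assume m: "m \<in> gker Clz E (Az i y5)"
    have mi: "m 0 i = 0" using claim1[OF m] .
    have "boxed (box n i) m" unfolding boxed_def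
    proof (intro allI impI)
      fix w j assume "(w, j) \<notin> box n i"
      then show "m w j = 0" using m mi unfolding gker_def boxed_def Clz_def
        by (cases "(w, j) = (0, i)") auto
    qed
    moreover have "\<forall>e\<in>E. (\<Sum>c\<in>box n i. RM r e c * uc m c) = 0"
      using m Az_split[where x=y5 and m=m and n=n] mi unfolding gker_def Clz_def by (auto simp: RMy cong: sum.cong)
    ultimately show "m \<in> K0" unfolding K0_def gker_def by blast
  qed
  have K0b: "\<And>m. m \<in> K0 \<Longrightarrow> boxed (box n i) m" unfolding K0_def using gker_boxed by blast
  have K0i: "m 0 i = 0" if "m \<in> K0" for m using K0b[OF that] by (simp add: boxed_def box_def)
  have d1: "VS.dim (gker Clz E (Az i y5)) \<le> VS.dim K0"
    using dim_mono_boxed[OF finite_box K0b claim2] .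
  have d2: "VS.dim (gker Clz E (Az i r)) \<le> VS.dim (gker Clz E (Az i y5))"
  proof (rule lemmaG[OF fClz fE _ gen2])
    fix e c assume ec: "e \<in> E" "c \<in> Clz"
    obtain u v where uv: "e = (u, v)" "u < v" "v < n" using ec sgE by auto
    show "polyfun (box n (i + 2)) (\<lambda>x. Az i x e c)"
    proof (cases "snd c < i")
      case True
      have "polyfun (box n (i + 2)) (\<lambda>x. RM x e c)" using uv True by (intro polyfun_RM) auto
      then show ?thesis using True by (simp add: Az_def)
    next
      case False
      have "polyfun (box n (i + 2)) (\<lambda>x. zf x i e)" unfolding zf_def using uv
        by (intro polyfun_mult polyfun_diff polyfun_var) (auto simp: box_def)
      then show ?thesis using False by (simp add: Az_def)
    qed
  qed
  define m where "m = (\<lambda>w j. if (w, j) \<in> box n i then m1 w j else if (w, j) = (0, i) then 1 else (0::complex))"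
  have mK: "m \<in> gker Clz E (Az i r)" unfolding gker_def
  proof (intro CollectI conjI ballI)
    show "boxed Clz m" by (auto simp: boxed_def m_def Clz_def)
    fix e assume e: "e \<in> E"
    have "(\<Sum>c\<in>box n i. RM r e c * uc m c) = (\<Sum>c\<in>box n i. RM r e c * uc m1 c)"
      by (rule sum.cong) (auto simp: m_def uc_def)
    moreover have "m 0 i = 1" by (simp add: m_def box_def)
    ultimately show "(\<Sum>c\<in>Clz. Az i r e c * uc m c) = 0"
      using Az_split[where x=r and e=e and m=m and n=n] m1 e unfolding Clz_def by simp
  qed
  have m0i: "m 0 i = 1" by (simp add: m_def box_def)
  obtain B0 where B0: "B0 \<subseteq> K0" "VS.independent B0" "K0 \<subseteq> VS.span B0" "finite B0" "card B0 = VS.dim K0"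
    using boxed_basis[OF finite_box K0b] by blast
  have spB0: "VS.span B0 \<subseteq> K0" using B0(1) gker_subspace VS.span_minimal unfolding K0_def by blast
  have mnot: "m \<notin> VS.span B0" using spB0 K0i m0i by force
  have indm: "VS.independent (insert m B0)" using VS.independent_insertI[OF mnot B0(2)] .
  have K0sub: "K0 \<subseteq> gker Clz E (Az i r)"
  proof
    fix k assume k: "k \<in> K0"
    have kb: "boxed (box n i) k" using K0b[OF k] .
    have "boxed Clz k" using kb by (auto simp: boxed_def Clz_def)
    moreover have "\<forall>e\<in>E. (\<Sum>c\<in>Clz. Az i r e c * uc k c) = 0"
      using k K0i[OF k] Az_split[where x=r and m=k and n=n] unfolding K0_def gker_def Clz_def by auto
    ultimately show "k \<in> gker Clz E (Az i r)" unfolding gker_def by blast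
  qed
  have sub: "insert m B0 \<subseteq> VS.span (gker Clz E (Az i r))"
    using mK B0(1) K0sub VS.span_superset by blast
  have gb: "\<And>m'. m' \<in> gker Clz E (Az i r) \<Longrightarrow> boxed Clz m'" by (rule gker_boxed)
  have "card (insert m B0) \<le> VS.dim (gker Clz E (Az i r))"
    using boxed_card_le[OF fClz gb indm sub] by simp
  moreover have "card (insert m B0) = card B0 + 1" using mnot B0(4) VS.span_superset by (simp add: card_insert_if) blast
  ultimately show False using d1 d2 B0(5) by linarith
qed

lemma stepC:
  assumes sgE: "E \<subseteq> {(u, v). u < v \<and> v < n}" and fE: "finite E"
    and noz: "\<not> (\<exists>m1. \<forall>e\<in>E. (\<Sum>c\<in>box n i. RM r e c * uc m1 c) + zf r i e = 0)"
  shows "VS.dim (gker (box n (Suc i)) E (RM r)) + VS.dim (gker (box n i \<union> {0..<n} \<times> {Suc i}) E (RM r)) + 1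
         \<le> VS.dim (gker (box n (Suc (Suc i))) E (RM r)) + VS.dim (gker (box n i) E (RM r))"
proof -
  define Cb where "Cb = box n i \<union> {0..<n} \<times> {Suc i}"
  have a1: "finite (box n (Suc (Suc i)))" by simp
  have a2: "\<And>m. m \<in> gker (box n (Suc (Suc i))) E (RM r) \<Longrightarrow> boxed (box n (Suc (Suc i))) m"
    using gker_boxed by blast
  have a3: "gker (box n (Suc i)) E (RM r) \<subseteq> gker (box n (Suc (Suc i))) E (RM r)"
    by (rule gker_mono) (auto simp: box_def)
  have a4: "gker (box n i \<union> {0..<n} \<times> {Suc i}) E (RM r) \<subseteq> gker (box n (Suc (Suc i))) E (RM r)"
    by (rule gker_mono) (auto simp: box_def)
  have a5: "VS.subspace (gker (box n (Suc i)) E (RM r))" by (rule gker_subspace)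
  have a6: "VS.subspace (gker (box n i \<union> {0..<n} \<times> {Suc i}) E (RM r))" by (rule gker_subspace)
  have "box n (Suc i) \<inter> (box n i \<union> {0..<n} \<times> {Suc i}) = box n i" by (auto simp: box_def)
  then have a7: "gker (box n i) E (RM r) = gker (box n (Suc i)) E (RM r) \<inter> gker (box n i \<union> {0..<n} \<times> {Suc i}) E (RM r)"
    using gker_Int[of "box n (Suc i)" "box n i \<union> {0..<n} \<times> {Suc i}" E "RM r"] by (simp add: box_def)
  define w0 where "w0 = (\<lambda>w j. if w < n \<and> j = i then r w (Suc i) else if w < n \<and> j = Suc i then - r w i else 0)"
  have a8: "w0 \<in> gker (box n (Suc (Suc i))) E (RM r)"
    unfolding gker_def
  proof (intro CollectI conjI ballI)
    show "boxed (box n (Suc (Suc i))) w0" by (auto simp: boxed_def box_def w0_def)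
    fix e assume e: "e \<in> E"
    then obtain u v where uv: "e = (u, v)" "u < v" "v < n" using sgE by auto
    have "(\<Sum>c\<in>box n (Suc (Suc i)). RM r e c * uc w0 c) = (\<Sum>j<Suc (Suc i). (r u j - r v j) * (w0 u j - w0 v j))"
      unfolding uv(1) by (rule row_sum) (use uv in auto)
    also have "\<dots> = (\<Sum>j<i. (r u j - r v j) * (w0 u j - w0 v j)) + (r u i - r v i) * (w0 u i - w0 v i)
        + (r u (Suc i) - r v (Suc i)) * (w0 u (Suc i) - w0 v (Suc i))" by simp
    also have "(\<Sum>j<i. (r u j - r v j) * (w0 u j - w0 v j)) = 0"
      by (rule sum.neutral) (auto simp: w0_def)
    finally show "(\<Sum>c\<in>box n (Suc (Suc i)). RM r e c * uc w0 c) = 0"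
      using uv by (simp add: w0_def algebra_simps)
  qed
  have a9: "w0 \<noteq> m1 + m2" if m1: "m1 \<in> gker (box n (Suc i)) E (RM r)" and m2: "m2 \<in> gker (box n i \<union> {0..<n} \<times> {Suc i}) E (RM r)" for m1 m2
  proof
    assume eq: "w0 = m1 + m2"
    have m2i: "m2 w i = 0" for w using m2 unfolding gker_def boxed_def by (auto simp: box_def)
    have m1i: "m1 w i = r w (Suc i)" if "w < n" for w
    proof -
      have "w0 w i = m1 w i + m2 w i" using eq by (simp add: plus_fun_def)
      then show ?thesis using m2i that by (simp add: w0_def)
    qed
    have "\<forall>e\<in>E. (\<Sum>c\<in>box n i. RM r e c * uc m1 c) + zf r i e = 0"
    proof
      fix e assume e: "e \<in> E"
      then obtain u v where uv: "e = (u, v)" "u < v" "v < n" using sgE by auto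
      have "0 = (\<Sum>c\<in>box n (Suc i). RM r e c * uc m1 c)" using m1 e unfolding gker_def by auto
      also have "\<dots> = (\<Sum>j<Suc i. (r u j - r v j) * (m1 u j - m1 v j))"
        unfolding uv(1) by (rule row_sum) (use uv in auto)
      also have "\<dots> = (\<Sum>j<i. (r u j - r v j) * (m1 u j - m1 v j)) + (r u i - r v i) * (m1 u i - m1 v i)" by simp
      also have "(\<Sum>j<i. (r u j - r v j) * (m1 u j - m1 v j)) = (\<Sum>c\<in>box n i. RM r e c * uc m1 c)"
        unfolding uv(1) by (rule row_sum[symmetric]) (use uv in auto)
      also have "(r u i - r v i) * (m1 u i - m1 v i) = zf r i e"
        using uv m1i[of u] m1i[of v] by (simp add: zf_def)
      finally show "(\<Sum>c\<in>box n i. RM r e c * uc m1 c) + zf r i e = 0" by simp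
    qed
    then show False using noz by blast
  qed
  show ?thesis by (rule count_lemma[OF a1 a2 a3 a4 a5 a6 a7 a8 a9])
qed

lemma swap_dim:
  assumes sgE: "E \<subseteq> {(u, v). u < v \<and> v < n}"
  shows "VS.dim (gker (box n (Suc i)) E (RM (\<lambda>w j. r w (Transposition.transpose i (Suc i) j))))
         \<le> VS.dim (gker (box n i \<union> {0..<n} \<times> {Suc i}) E (RM r))"
proof -
  define \<tau> where "\<tau> = Transposition.transpose i (Suc i)"
  define \<sigma> where "\<sigma> m = (\<lambda>w j. m w (\<tau> j))" for m :: "nat \<Rightarrow> nat \<Rightarrow> complex"
  define Cb where "Cb = box n i \<union> {0..<n} \<times> {Suc i}"
  define Sb where "Sb = gker Cb E (RM r)"
  define rsw where "rsw = (\<lambda>w j. r w (\<tau> j))"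
  have tt: "\<tau> (\<tau> j) = j" for j by (simp add: \<tau>_def)
  have ss: "\<sigma> (\<sigma> m) = m" for m by (simp add: \<sigma>_def tt)
  have fCb: "finite Cb" by (simp add: Cb_def)
  have Cbsub: "Cb \<subseteq> box n (Suc (Suc i))" by (auto simp: Cb_def box_def)
  have perm: "\<tau> permutes {..<Suc (Suc i)}" unfolding \<tau>_def by (rule permutes_swap_id) auto
  have incl: "gker (box n (Suc i)) E (RM rsw) \<subseteq> \<sigma> ` Sb"
  proof
    fix m assume m: "m \<in> gker (box n (Suc i)) E (RM rsw)"
    have mb: "boxed (box n (Suc i)) m" using m gker_boxed by blast
    have sb: "boxed Cb (\<sigma> m)" unfolding boxed_def
    proof (intro allI impI)
      fix w j assume wj: "(w, j) \<notin> Cb"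
      have "(w, \<tau> j) \<notin> box n (Suc i)" using wj by (auto simp: Cb_def box_def \<tau>_def Transposition.transpose_def)
      then show "\<sigma> m w j = 0" using mb by (simp add: \<sigma>_def boxed_def)
    qed
    have "\<sigma> m \<in> Sb" unfolding Sb_def gker_def
    proof (intro CollectI conjI ballI)
      show "boxed Cb (\<sigma> m)" by (rule sb)
      fix e assume e: "e \<in> E"
      then obtain u v where uv: "e = (u, v)" "u < v" "v < n" using sgE by auto
      have "(\<Sum>c\<in>Cb. RM r e c * uc (\<sigma> m) c) = (\<Sum>c\<in>box n (Suc (Suc i)). RM r e c * uc (\<sigma> m) c)"
        by (rule gker_sum_eq[OF sb Cbsub finite_box, of "RM r" e, symmetric])
      also have "\<dots> = (\<Sum>j<Suc (Suc i). (r u j - r v j) * (\<sigma> m u j - \<sigma> m v j))"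
        unfolding uv(1) by (rule row_sum) (use uv in auto)
      also have "\<dots> = (\<Sum>j<Suc (Suc i). (r u (\<tau> j) - r v (\<tau> j)) * (m u j - m v j))"
        by (subst sum.permute[OF perm]) (simp add: \<sigma>_def tt comp_def)
      also have "\<dots> = (\<Sum>j<Suc i. (rsw u j - rsw v j) * (m u j - m v j))"
        using mb by (simp add: rsw_def boxed_def box_def)
      also have "\<dots> = (\<Sum>c\<in>box n (Suc i). RM rsw e c * uc m c)"
        unfolding uv(1) by (rule row_sum[symmetric]) (use uv in auto)
      also have "\<dots> = 0" using m e unfolding gker_def by auto
      finally show "(\<Sum>c\<in>Cb. RM r e c * uc (\<sigma> m) c) = 0" .
    qed
    then show "m \<in> \<sigma> ` Sb" using ss[of m] by (metis image_eqI)
  qed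
  have Sbb: "\<And>m. m \<in> Sb \<Longrightarrow> boxed Cb m" unfolding Sb_def using gker_boxed by blast
  have imb: "\<And>m. m \<in> \<sigma> ` Sb \<Longrightarrow> boxed (box n (Suc (Suc i))) m"
  proof -
    fix m assume "m \<in> \<sigma> ` Sb"
    then obtain m' where m': "m' \<in> Sb" "m = \<sigma> m'" by blast
    show "boxed (box n (Suc (Suc i))) m" unfolding boxed_def
    proof (intro allI impI)
      fix w j assume "(w, j) \<notin> box n (Suc (Suc i))"
      then have "(w, \<tau> j) \<notin> Cb" by (auto simp: Cb_def box_def \<tau>_def Transposition.transpose_def)
      then show "m w j = 0" using Sbb[OF m'(1)] m'(2) by (simp add: \<sigma>_def boxed_def)
    qed
  qed
  have "VS.dim (gker (box n (Suc i)) E (RM rsw)) \<le> VS.dim (\<sigma> ` Sb)"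
    by (rule dim_mono_boxed[OF finite_box imb incl])
  also have "\<dots> \<le> VS.dim Sb"
    by (rule dim_image_le[OF fCb Sbb]) (auto simp: \<sigma>_def cscale_def plus_fun_def)
  finally show ?thesis unfolding Sb_def Cb_def rsw_def \<tau>_def .
qed

theorem lemma3p10:
  fixes n d :: nat and E :: "(nat \<times> nat) set"
  assumes "d \<ge> 3"
    and "simple_graph n E"
    and "\<not> M_independent n E (d - 2)"
    and "1 \<le> i" and "i \<le> d - 2"
    and "generic n i p" and "generic n (i + 1) q" and "generic n (i + 2) r"
  shows "int (motion_dim n E i p)
           \<ge> 2 * int (motion_dim n E (i + 1) q) - int (motion_dim n E (i + 2) r) + 1"
proof -
  have sgE: "E \<subseteq> {(u, v). u < v \<and> v < n}" using assms(2) by (simp add: simple_graph_def)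
  have sub0: "{(u, v). u < v \<and> v < n} \<subseteq> {0..<n} \<times> {0..<n}" by auto
  have fin0: "finite ({0..<n} \<times> {0..<n})" by simp
  have fE: "finite E" by (rule finite_subset[OF subset_trans[OF sgE sub0] fin0])
  obtain p0 where p0: "generic n (d - 2) p0" "\<not> rows_independent n E (d - 2) p0"
    using assms(3) unfolding M_independent_def by blast
  from p0(2) obtain c where c: "\<forall>w<n. \<forall>j<d - 2. (\<Sum>e\<in>E. c e * rig_entry p0 e w j) = 0"
      and cn: "\<not> (\<forall>e\<in>E. c e = 0)"
    unfolding rows_independent_def by (auto simp del: Set.ball_simps)
  from cn obtain e1 where e1: "e1 \<in> E" "c e1 \<noteq> 0" by blast
  obtain c' where c': "boxed E c'" "\<exists>e0\<in>E. uc c' e0 \<noteq> 0"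
      "\<forall>w<n. \<forall>j<i. (\<Sum>e\<in>E. RM r e (w, j) * uc c' e) = 0"
    using stress_exists[OF sgE fE p0(1) c e1 assms(5), of r] by blast
  then obtain e0 where e0: "e0 \<in> E" "uc c' e0 \<noteq> 0" by blast
  have gen2: "alg_indep_Q (box n (i + 2)) (\<lambda>(w, j). r w j)" using assms(8) by (simp add: generic_def box_def)
  have noz: "\<not> (\<exists>m1. \<forall>e\<in>E. (\<Sum>c\<in>box n i. RM r e c * uc m1 c) + zf r i e = 0)"
    by (rule ztrick[OF sgE fE gen2 c'(1) e0 c'(3)])
  have C: "VS.dim (gker (box n (Suc i)) E (RM r)) + VS.dim (gker (box n i \<union> {0..<n} \<times> {Suc i}) E (RM r)) + 1
         \<le> VS.dim (gker (box n (Suc (Suc i))) E (RM r)) + VS.dim (gker (box n i) E (RM r))"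
    by (rule stepC[OF sgE fE noz])
  have md: "motion_dim n E k x = VS.dim (gker (box n k) E (RM x))" for k x
    by (simp add: motion_dim_def inf_motions_gker)
  have polyRM: "polyfun (box n k) (\<lambda>x. RM x e c)" if "e \<in> E" "c \<in> box n k" for e c k
    using that sgE by (intro polyfun_RM) (auto simp: box_def)
  have genq: "alg_indep_Q (box n (Suc i)) (\<lambda>(w, j). q w j)" using assms(7) by (simp add: generic_def box_def)
  have geni: "alg_indep_Q (box n i) (\<lambda>(w, j). r w j)"
    by (rule alg_indep_subset[OF gen2 _ finite_box]) (auto simp: box_def)
  have ka: "motion_dim n E (i + 1) q \<le> VS.dim (gker (box n (Suc i)) E (RM r))"
    unfolding md using lemmaG[OF finite_box fE polyRM genq, where y=r] by simp
  have kb1: "motion_dim n E (i + 1) q \<le> VS.dim (gker (box n (Suc i)) E (RM (\<lambda>w j. r w (Transposition.transpose i (Suc i) j))))"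
    unfolding md using lemmaG[OF finite_box fE polyRM genq, where y="\<lambda>w j. r w (Transposition.transpose i (Suc i) j)"] by simp
  have kb: "motion_dim n E (i + 1) q \<le> VS.dim (gker (box n i \<union> {0..<n} \<times> {Suc i}) E (RM r))"
    using kb1 swap_dim[OF sgE, of i r] by linarith
  have k0: "VS.dim (gker (box n i) E (RM r)) \<le> motion_dim n E i p"
    unfolding md using lemmaG[OF finite_box fE polyRM geni, where y=p] by simp
  have k2: "motion_dim n E (i + 2) r = VS.dim (gker (box n (Suc (Suc i))) E (RM r))"
    unfolding md by (simp add: numeral_2_eq_2)
  have "2 * motion_dim n E (i + 1) q + 1 \<le> motion_dim n E (i + 2) r + motion_dim n E i p"
    using C ka kb k0 k2 by linarith
  then show ?thesis by linarith
qed

end
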